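(* Let $t>0$ be fixed and $x_1,x_2>0$ with $x_1\ne x_2$. Then the characteristic triangles $\Delta(x_1,t)$ and $\Delta(x_2,t)$ do not intersect in the open quadrant $(0,\infty)^2$.
   Context: Standing assumptions: $u_0,u_b:[0,\infty)\to\mathbb{R}$ bounded measurable with $u_b>0$; $\rho_0,\rho_b:[0,\infty)\to(0,\infty)$ positive locally bounded measurable. For $x,t,y,\tau\ge0$: $F(y,x,t)=\int_0^y[tu_0(\eta)+\eta-x]\rho_0(\eta)\,d\eta$, $G(\tau,x,t)=\int_0^\tau[x-u_b(\eta)(t-\eta)]\rho_b(\eta)u_b(\eta)\,d\eta$, $F(x,t)=\min_{y\ge0}F(y,x,t)$, $G(x,t)=\min_{\tau\ge0}G(\tau,x,t)$ (minima attained); $y_*\le y^*$ smallest/largest minimizers of $F(\cdot,x,t)$, $\tau_*\le\tau^*$ those of $G(\cdot,x,t)$. Characteristic triangle $\Delta(x,t)$ ($x\ge0,t>0$): (1) if $x>0$, $F(x,t)<G(x,t)$: convex hull of $(x,t),(y_*(x,t),0),(y^*(x,t),0)$; (2) if $F(x,t)>G(x,t)$: convex hull of $(x,t),(0,\tau_*(x,t)),(0,\tau^*(x,t))$; (3) if $F(x,t)=G(x,t)$: convex hull of $(x,t),(y^*(x,t),0),(0,\tau^*(x,t)),(0,0)$; (4) if $x=0$, $F(0,t)<G(0,t)$: convex hull of $(0,t),(0,0),(y^*(0,t),0)$. *)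

theory Defs
  imports "HOL-Analysis.Analysis"
begin

definition standing_assms ::
  "(real \<Rightarrow> real) \<Rightarrow> (real \<Rightarrow> real) \<Rightarrow> (real \<Rightarrow> real) \<Rightarrow> (real \<Rightarrow> real) \<Rightarrow> bool" where
  "standing_assms u0 ub rho0 rhob \<longleftrightarrow>
     set_borel_measurable borel {0..} u0 \<and> bounded (u0 ` {0..}) \<and>
     set_borel_measurable borel {0..} ub \<and> bounded (ub ` {0..}) \<and> (\<forall>\<eta>\<ge>0. ub \<eta> > 0) \<and>
     set_borel_measurable borel {0..} rho0 \<and> (\<forall>\<eta>\<ge>0. rho0 \<eta> > 0) \<and>
       (\<forall>c\<ge>0. bounded (rho0 ` {0..c})) \<and>
     set_borel_measurable borel {0..} rhob \<and> (\<forall>\<eta>\<ge>0. rhob \<eta> > 0) \<and>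
       (\<forall>c\<ge>0. bounded (rhob ` {0..c}))"

definition Fyxt :: "(real \<Rightarrow> real) \<Rightarrow> (real \<Rightarrow> real) \<Rightarrow> real \<Rightarrow> real \<Rightarrow> real \<Rightarrow> real" where
  "Fyxt u0 rho0 y x t = (LINT \<eta>:{0..y}|lborel. (t * u0 \<eta> + \<eta> - x) * rho0 \<eta>)"

definition Gtxt :: "(real \<Rightarrow> real) \<Rightarrow> (real \<Rightarrow> real) \<Rightarrow> real \<Rightarrow> real \<Rightarrow> real \<Rightarrow> real" where
  "Gtxt ub rhob \<tau> x t = (LINT \<eta>:{0..\<tau>}|lborel. (x - ub \<eta> * (t - \<eta>)) * rhob \<eta> * ub \<eta>)"

text \<open>F(x,t) = min over y \<ge> 0, G(x,t) = min over tau \<ge> 0 (the minima are attained).\<close>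
definition Fmin :: "(real \<Rightarrow> real) \<Rightarrow> (real \<Rightarrow> real) \<Rightarrow> real \<Rightarrow> real \<Rightarrow> real" where
  "Fmin u0 rho0 x t = (INF y\<in>{0..}. Fyxt u0 rho0 y x t)"

definition Gmin :: "(real \<Rightarrow> real) \<Rightarrow> (real \<Rightarrow> real) \<Rightarrow> real \<Rightarrow> real \<Rightarrow> real" where
  "Gmin ub rhob x t = (INF \<tau>\<in>{0..}. Gtxt ub rhob \<tau> x t)"

definition Fargmin :: "(real \<Rightarrow> real) \<Rightarrow> (real \<Rightarrow> real) \<Rightarrow> real \<Rightarrow> real \<Rightarrow> real set" where
  "Fargmin u0 rho0 x t = {y. y \<ge> 0 \<and> Fyxt u0 rho0 y x t = Fmin u0 rho0 x t}"

definition Gargmin :: "(real \<Rightarrow> real) \<Rightarrow> (real \<Rightarrow> real) \<Rightarrow> real \<Rightarrow> real \<Rightarrow> real set" where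
  "Gargmin ub rhob x t = {\<tau>. \<tau> \<ge> 0 \<and> Gtxt ub rhob \<tau> x t = Gmin ub rhob x t}"

definition y_lo where "y_lo u0 rho0 x t = Inf (Fargmin u0 rho0 x t)"
definition y_hi where "y_hi u0 rho0 x t = Sup (Fargmin u0 rho0 x t)"
definition tau_lo where "tau_lo ub rhob x t = Inf (Gargmin ub rhob x t)"
definition tau_hi where "tau_hi ub rhob x t = Sup (Gargmin ub rhob x t)"

text \<open>Characteristic triangle Delta(x,t), points written as (space, time).\<close>
definition char_triangle ::
  "(real \<Rightarrow> real) \<Rightarrow> (real \<Rightarrow> real) \<Rightarrow> (real \<Rightarrow> real) \<Rightarrow> (real \<Rightarrow> real) \<Rightarrow> real \<Rightarrow> real \<Rightarrow> (real \<times> real) set" where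
  "char_triangle u0 ub rho0 rhob x t =
     (let F = Fmin u0 rho0 x t; G = Gmin ub rhob x t in
      if x > 0 \<and> F < G then
        convex hull {(x, t), (y_lo u0 rho0 x t, 0), (y_hi u0 rho0 x t, 0)}
      else if F > G then
        convex hull {(x, t), (0, tau_lo ub rhob x t), (0, tau_hi ub rhob x t)}
      else if F = G then
        convex hull {(x, t), (y_hi u0 rho0 x t, 0), (0, tau_hi ub rhob x t), (0, 0)}
      else
        convex hull {(0, t), (0, 0), (y_hi u0 rho0 x t, 0)})"

end

theory Submission
  imports Defs
begin


definition good :: "(real \<Rightarrow> real) \<Rightarrow> bool" where
  "good g \<longleftrightarrow> (\<lambda>x. indicator {0..} x * g x) \<in> borel_measurable borel \<and>
     (\<forall>c\<ge>0. \<exists>B. \<forall>x\<in>{0..c}. \<bar>g x\<bar> \<le> B)"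

lemma good_meas: "good g \<Longrightarrow> (\<lambda>x. indicator {0..} x * g x) \<in> borel_measurable borel"
  unfolding good_def by (rule conjunct1)

lemma good_bdd:
  assumes "good g" "0 \<le> c"
  shows "\<exists>B. \<forall>x\<in>{0..c}. \<bar>g x\<bar> \<le> B"
proof -
  have "\<forall>c\<ge>0. \<exists>B. \<forall>x\<in>{0..c}. \<bar>g x\<bar> \<le> B" using assms(1) unfolding good_def by (rule conjunct2)
  then show ?thesis using assms(2) by simp
qed

lemma goodI:
  assumes "(\<lambda>x. indicator {0..} x * g x) \<in> borel_measurable borel" "\<And>c. 0 \<le> c \<Longrightarrow> \<exists>B. \<forall>x\<in>{0..c}. \<bar>g x\<bar> \<le> B"
  shows "good g"
  unfolding good_def using assms by simp

lemma good_mult: "good f \<Longrightarrow> good g \<Longrightarrow> good (\<lambda>x. f x * g x)"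
proof -
  assume f: "good f" and g: "good g"
  have "(\<lambda>x. indicator {0..} x * (f x * g x)) = (\<lambda>x. (indicator {0..} x * f x) * (indicator {0..} x * g x))"
    by (auto simp: indicator_def)
  moreover have "(\<lambda>x. (indicator {0..} x * f x) * (indicator {0..} x * g x)) \<in> borel_measurable borel"
  proof -
    have "(\<lambda>x. indicator {0..} x * f x) \<in> borel_measurable borel" "(\<lambda>x. indicator {0..} x * g x) \<in> borel_measurable borel"
      using f g by (simp_all add: good_meas)
    then show ?thesis by (rule borel_measurable_times)
  qed
  moreover have "\<exists>B. \<forall>x\<in>{0..c}. \<bar>f x * g x\<bar> \<le> B" if "c \<ge> 0" for c
  proof -
    obtain B1 where B1: "\<forall>x\<in>{0..c}. \<bar>f x\<bar> \<le> B1" using good_bdd[OF f \<open>0 \<le> c\<close>] by blast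
    obtain B2 where B2: "\<forall>x\<in>{0..c}. \<bar>g x\<bar> \<le> B2" using good_bdd[OF g \<open>0 \<le> c\<close>] by blast
    have "\<bar>f x * g x\<bar> \<le> B1 * B2" if "x \<in> {0..c}" for x
      using B1 B2 that by (simp add: abs_mult mult_mono')
    then show ?thesis by blast
  qed
  ultimately show ?thesis using goodI[of "\<lambda>x. f x * g x"] by simp
qed

lemma good_add: "good f \<Longrightarrow> good g \<Longrightarrow> good (\<lambda>x. f x + g x)"
proof -
  assume f: "good f" and g: "good g"
  have "(\<lambda>x. indicator {0..} x * (f x + g x)) = (\<lambda>x. (indicator {0..} x * f x) + (indicator {0..} x * g x))"
    by (auto simp: indicator_def)
  moreover have "(\<lambda>x. (indicator {0..} x * f x) + (indicator {0..} x * g x)) \<in> borel_measurable borel"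
  proof -
    have "(\<lambda>x. indicator {0..} x * f x) \<in> borel_measurable borel" "(\<lambda>x. indicator {0..} x * g x) \<in> borel_measurable borel"
      using f g by (simp_all add: good_meas)
    then show ?thesis by (rule borel_measurable_add)
  qed
  moreover have "\<exists>B. \<forall>x\<in>{0..c}. \<bar>f x + g x\<bar> \<le> B" if "c \<ge> 0" for c
  proof -
    obtain B1 where B1: "\<forall>x\<in>{0..c}. \<bar>f x\<bar> \<le> B1" using good_bdd[OF f \<open>0 \<le> c\<close>] by blast
    obtain B2 where B2: "\<forall>x\<in>{0..c}. \<bar>g x\<bar> \<le> B2" using good_bdd[OF g \<open>0 \<le> c\<close>] by blast
    have "\<bar>f x + g x\<bar> \<le> B1 + B2" if "x \<in> {0..c}" for x
      using B1 B2 that by (meson abs_triangle_ineq add_mono order_trans)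
    then show ?thesis by blast
  qed
  ultimately show ?thesis using goodI[of "\<lambda>x. f x + g x"] by simp
qed

lemma good_const: "good (\<lambda>x. c)"
  by (rule goodI) auto

lemma good_id: "good (\<lambda>x. x)"
proof (rule goodI)
  have "(\<lambda>x::real. indicator {0..} x * x) = (\<lambda>x. max 0 x)" by (auto simp: indicator_def max_def)
  moreover have "(\<lambda>x::real. max ((\<lambda>x. 0) x) ((\<lambda>x. x) x)) \<in> borel_measurable borel"
    by (rule borel_measurable_max) simp_all
  ultimately show "(\<lambda>x::real. indicator {0..} x * x) \<in> borel_measurable borel" by simp
  fix c :: real assume "0 \<le> c"
  then show "\<exists>B. \<forall>x\<in>{0..c}. \<bar>x\<bar> \<le> B" by (intro exI[of _ c]) auto
qed

lemma good_integrable: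
  assumes "good g" "A \<in> sets borel" "A \<subseteq> {0..c}"
  shows "set_integrable lborel A g"
proof -
  have c: "c \<ge> 0 \<or> A = {}" using assms(3) by auto
  show ?thesis
  proof (cases "A = {}")
    case True then show ?thesis by (simp add: set_integrable_def)
  next
    case False
    then have "c \<ge> 0" using c by simp
    obtain B where B: "\<forall>x\<in>{0..c}. \<bar>g x\<bar> \<le> B" using good_bdd[OF assms(1) \<open>c\<ge>0\<close>] by blast
    have eq: "(\<lambda>x. indicator A x *\<^sub>R g x) = (\<lambda>x. indicator A x * (indicator {0..} x * g x))"
      proof (rule ext)
      fix x show "indicator A x *\<^sub>R g x = indicator A x * (indicator {0..} x * g x)"
        using assms(3) by (cases "x \<in> A") (auto simp: indicator_def)
    qed
    have m: "(\<lambda>x. indicator A x * (indicator {0..} x * g x)) \<in> borel_measurable lborel"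
    proof -
      have "(\<lambda>x. indicator {0..} x * g x) \<in> borel_measurable borel" using good_meas[OF assms(1)] .
      moreover have "indicator A \<in> borel_measurable borel" using assms(2) by simp
      ultimately have "(\<lambda>x. indicator A x * (indicator {0..} x * g x)) \<in> borel_measurable borel"
        by (rule borel_measurable_times[rotated])
      then show ?thesis by simp
    qed
    have B0: "0 \<le> B" using B \<open>0 \<le> c\<close> by (meson abs_ge_zero atLeastAtMost_iff order_refl order_trans)
    have fin: "emeasure lborel {0..c} < \<infinity>" using \<open>0 \<le> c\<close> by simp
    have bnd: "AE x in lborel. x \<in> {0..c} \<longrightarrow> norm (indicator A x * (indicator {0..} x * g x)) \<le> B"
    proof (rule AE_I2, rule impI)
      fix x :: real assume x: "x \<in> {0..c}"
      show "norm (indicator A x * (indicator {0..} x * g x)) \<le> B"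
        using B x B0 by (cases "x \<in> A") (auto simp: indicator_def)
    qed
    have null: "AE x in lborel. x \<notin> {0..c} \<longrightarrow> indicator A x * (indicator {0..} x * g x) = 0"
    proof (rule AE_I2, rule impI)
      fix x :: real assume x: "x \<notin> {0..c}"
      then have "x \<notin> A" using assms(3) by blast
      then show "indicator A x * (indicator {0..} x * g x) = 0" by simp
    qed
    show ?thesis unfolding set_integrable_def eq
      by (rule integrableI_bounded_set[where A="{0..c}" and B=B, OF _ m fin bnd null]) simp
  qed
qed



lemma good_split:
  assumes "good g" "0 \<le> a" "a \<le> b"
  shows "(LINT x:{0..b}|lborel. g x) = (LINT x:{0..a}|lborel. g x) + (LINT x:{a<..b}|lborel. g x)"
proof -
  have "{0..b} = {0..a} \<union> {a<..b}" using assms by auto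
  moreover have "set_integrable lborel {0..a} g" by (rule good_integrable[OF assms(1), of _ b]) (use assms in auto)
  moreover have "set_integrable lborel {a<..b} g" by (rule good_integrable[OF assms(1), of _ b]) (use assms in auto)
  moreover have "{0..a} \<inter> {a<..b} = {}" by auto
  ultimately show ?thesis using set_integral_Un[of "{0..a}" "{a<..b}" lborel g] by simp
qed

lemma set_int_nonneg:
  fixes g :: "real \<Rightarrow> real"
  assumes "\<And>x. x \<in> A \<Longrightarrow> 0 \<le> g x"
  shows "0 \<le> (LINT x:A|lborel. g x)"
  unfolding set_lebesgue_integral_def
  by (intro integral_nonneg_AE) (use assms in \<open>auto simp: indicator_def\<close>)

lemma good_pos:
  assumes "good g" "0 \<le> a" "a < b" "\<And>x. x \<in> {a<..b} \<Longrightarrow> 0 < g x"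
  shows "0 < (LINT x:{a<..b}|lborel. g x)"
proof -
  let ?f = "\<lambda>x. indicator {a<..b} x *\<^sub>R g x"
  have sub: "{a<..b} \<subseteq> {0..b}" using assms(2) by auto
  have int: "integrable lborel ?f"
    using good_integrable[OF assms(1) _ sub] unfolding set_integrable_def by auto
  have nn: "\<And>x. 0 \<le> ?f x" using assms(4) by (auto simp: indicator_def less_imp_le)
  have ne: "integral\<^sup>L lborel ?f \<noteq> 0"
  proof
    assume "integral\<^sup>L lborel ?f = 0"
    then have "AE x in lborel. ?f x = 0"
      using integral_nonneg_eq_0_iff_AE[OF int] nn by auto
    then have "AE x in lborel. x \<notin> {a<..b}"
      by eventually_elim (use assms(4) in \<open>fastforce simp: indicator_def split: if_splits\<close>)
    then have "emeasure lborel {a<..b} = 0"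
      by (subst (asm) AE_iff_measurable[of "{a<..b}"]) auto
    then show False using assms(3) by simp
  qed
  have "0 \<le> integral\<^sup>L lborel ?f" using nn by (intro integral_nonneg_AE) auto
  with ne show ?thesis unfolding set_lebesgue_integral_def by linarith
qed

lemma good_bound:
  assumes "good g" "0 \<le> a" "a \<le> b" "\<And>x. x \<in> {a<..b} \<Longrightarrow> \<bar>g x\<bar> \<le> C"
  shows "\<bar>LINT x:{a<..b}|lborel. g x\<bar> \<le> C * (b - a)"
proof -
  have sub: "{a<..b} \<subseteq> {0..b}" using assms(2) by auto
  have int: "set_integrable lborel {a<..b} g"
    using good_integrable[OF assms(1) _ sub] by auto
  have intc: "set_integrable lborel {a<..b} (\<lambda>x. C)"
    using good_integrable[OF good_const _ sub] by auto
  have "\<bar>LINT x:{a<..b}|lborel. g x\<bar> \<le> (LINT x:{a<..b}|lborel. \<bar>g x\<bar>)"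
    using set_integral_norm_bound[OF int] by simp
  also have "\<dots> \<le> (LINT x:{a<..b}|lborel. C)"
    using int intc assms(4) by (intro set_integral_mono) (auto simp: set_integrable_abs)
  also have "\<dots> = C * (b - a)"
    using assms by (simp add: set_integral_const)
  finally show ?thesis .
qed

lemma good_lipschitz:
  assumes "good g" "0 \<le> K"
  shows "continuous_on {0..K} (\<lambda>y. LINT x:{0..y}|lborel. g x)"
proof -
  obtain B where B: "\<forall>x\<in>{0..K}. \<bar>g x\<bar> \<le> B" using good_bdd[OF assms] by blast
  have B0: "0 \<le> B" using B assms(2) by (meson abs_ge_zero atLeastAtMost_iff order.refl order_trans)
  have d: "\<bar>(LINT x:{0..y'}|lborel. g x) - (LINT x:{0..y}|lborel. g x)\<bar> \<le> B * (y' - y)"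
    if "0 \<le> y" "y \<le> y'" "y' \<le> K" for y y'
  proof -
    have "(LINT x:{0..y'}|lborel. g x) - (LINT x:{0..y}|lborel. g x) = (LINT x:{y<..y'}|lborel. g x)"
      using good_split[OF assms(1) that(1,2)] by simp
    also have "\<bar>\<dots>\<bar> \<le> B * (y' - y)"
      by (rule good_bound[OF assms(1) that(1,2)]) (use B that in auto)
    finally show ?thesis .
  qed
  have "B-lipschitz_on {0..K} (\<lambda>y. LINT x:{0..y}|lborel. g x)"
    unfolding lipschitz_on_def
  proof (intro conjI B0 ballI)
    fix y y' assume "y \<in> {0..K}" "y' \<in> {0..K}"
    then show "dist (LINT x:{0..y}|lborel. g x) (LINT x:{0..y'}|lborel. g x) \<le> B * dist y y'"
      using d[of y y'] d[of y' y] by (cases "y \<le> y'") (auto simp: dist_real_def abs_minus_commute)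
  qed
  then show ?thesis by (rule lipschitz_on_continuous_on)
qed



lemma argmin_props:
  fixes h :: "real \<Rightarrow> real"
  assumes cont: "continuous_on {0..K} h" and K: "0 \<le> K" and grow: "\<And>y. y > K \<Longrightarrow> h K < h y"
  shows "{y. 0 \<le> y \<and> h y = (INF z\<in>{0..}. h z)} \<noteq> {}"
    and "{y. 0 \<le> y \<and> h y = (INF z\<in>{0..}. h z)} \<subseteq> {0..K}"
    and "\<And>z. 0 \<le> z \<Longrightarrow> (INF z\<in>{0..}. h z) \<le> h z"
proof -
  obtain y0 where y0: "y0 \<in> {0..K}" "\<forall>y\<in>{0..K}. h y0 \<le> h y"
    using continuous_attains_inf[OF compact_Icc _ cont] K by auto
  have all: "h y0 \<le> h y" if "0 \<le> y" for y
  proof (cases "y \<le> K")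
    case True then show ?thesis using y0 that by auto
  next
    case False
    then have "h K < h y" using grow by auto
    moreover have "h y0 \<le> h K" using y0 K by auto
    ultimately show ?thesis by simp
  qed
  have bdd: "bdd_below (h ` {0..})" using all by (auto intro!: bdd_belowI2)
  have inf: "(INF z\<in>{0..}. h z) = h y0"
  proof (rule antisym)
    show "(INF z\<in>{0..}. h z) \<le> h y0" using bdd y0 by (auto intro!: cINF_lower)
    show "h y0 \<le> (INF z\<in>{0..}. h z)" using all by (auto intro!: cINF_greatest)
  qed
  show "{y. 0 \<le> y \<and> h y = (INF z\<in>{0..}. h z)} \<noteq> {}" using inf y0 by auto
  show "\<And>z. 0 \<le> z \<Longrightarrow> (INF z\<in>{0..}. h z) \<le> h z" using inf all by simp
  show "{y. 0 \<le> y \<and> h y = (INF z\<in>{0..}. h z)} \<subseteq> {0..K}"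
  proof
    fix y assume "y \<in> {y. 0 \<le> y \<and> h y = (INF z\<in>{0..}. h z)}"
    then have y: "0 \<le> y" "h y = h y0" using inf by auto
    show "y \<in> {0..K}"
    proof (rule ccontr)
      assume "y \<notin> {0..K}"
      then have "K < y" using y by auto
      then have "h K < h y" by (rule grow)
      moreover have "h y0 \<le> h K" using y0 K by auto
      ultimately show False using y by simp
    qed
  qed
qed

lemma set_bounds:
  fixes S :: "real set"
  assumes "S \<noteq> {}" "S \<subseteq> {0..K}"
  shows "0 \<le> Inf S" "Inf S \<le> Sup S" "Sup S \<le> K" "\<And>y. y \<in> S \<Longrightarrow> Inf S \<le> y \<and> y \<le> Sup S"
proof -
  have bb: "bdd_below S" "bdd_above S" using assms(2) by (auto intro!: bdd_belowI[of _ 0] bdd_aboveI[of _ K])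
  show "\<And>y. y \<in> S \<Longrightarrow> Inf S \<le> y \<and> y \<le> Sup S" using bb by (auto intro: cInf_lower cSup_upper)
  show "0 \<le> Inf S" using assms by (intro cInf_greatest) auto
  show "Sup S \<le> K" using assms by (intro cSup_least) auto
  obtain y where "y \<in> S" using assms by auto
  then show "Inf S \<le> Sup S" using bb by (meson cInf_lower cSup_upper order_trans)
qed

lemma sup_le_inf:
  fixes S T :: "real set"
  assumes "S \<noteq> {}" "T \<noteq> {}" "\<And>y z. y \<in> S \<Longrightarrow> z \<in> T \<Longrightarrow> y \<le> z"
  shows "Sup S \<le> Inf T"
  using assms by (intro cInf_greatest cSup_least) auto

lemma sup_zero:
  fixes S :: "real set"
  assumes "S \<noteq> {}" "\<And>y. y \<in> S \<Longrightarrow> y = 0"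
  shows "Sup S = 0"
proof -
  have "S = {0}" using assms by auto
  then show ?thesis by simp
qed

lemma argmin_mono:
  fixes hA hB M :: "real \<Rightarrow> real"
  assumes "\<And>y. 0 \<le> y \<Longrightarrow> hB y = hA y - c * M y" "c > 0"
    and Mmono: "\<And>a b. 0 \<le> a \<Longrightarrow> a < b \<Longrightarrow> M a < M b"
    and "0 \<le> yA" "\<And>z. 0 \<le> z \<Longrightarrow> hA yA \<le> hA z"
    and "0 \<le> yB" "\<And>z. 0 \<le> z \<Longrightarrow> hB yB \<le> hB z"
  shows "yA \<le> yB"
proof (rule ccontr)
  assume "\<not> yA \<le> yB"
  then have "M yB < M yA" using Mmono assms(6) by auto
  moreover have "hA yA \<le> hA yB" using assms by auto
  moreover have "hB yB \<le> hB yA" using assms by auto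
  ultimately show False using assms(1)[of yA] assms(1)[of yB] assms(2,4,6)
    by (smt (verit) mult_strict_left_mono)
qed



lemma conv_half:
  fixes a b c :: real and P :: "real \<times> real"
  assumes "a * fst P + b * snd P + c = 0"
  shows "convex ({z. 0 < a * fst z + b * snd z + c} \<union> {P})"
  unfolding convex_alt
proof (intro ballI allI impI)
  fix x y :: "real \<times> real" and u :: real
  assume x: "x \<in> {z. 0 < a * fst z + b * snd z + c} \<union> {P}"
    and y: "y \<in> {z. 0 < a * fst z + b * snd z + c} \<union> {P}" and u: "0 \<le> u \<and> u \<le> 1"
  let ?L = "\<lambda>z::real\<times>real. a * fst z + b * snd z + c"
  have aff: "?L ((1 - u) *\<^sub>R x + u *\<^sub>R y) = (1 - u) * ?L x + u * ?L y"
    by (simp add: algebra_simps)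
  have Lx: "0 \<le> ?L x" and Ly: "0 \<le> ?L y" using x y assms by auto
  show "(1 - u) *\<^sub>R x + u *\<^sub>R y \<in> {z. 0 < a * fst z + b * snd z + c} \<union> {P}"
  proof (cases "x = P \<and> y = P")
    case True
    then have "(1 - u) *\<^sub>R x + u *\<^sub>R y = P" by (simp add: algebra_simps)
    then show ?thesis by simp
  next
    case False
    show ?thesis
    proof (cases "u = 0")
      case True then show ?thesis using x by simp
    next
      case u0: False
      show ?thesis
      proof (cases "u = 1")
        case True then show ?thesis using y by simp
      next
        case False
        have "u > 0" "1 - u > 0" using u u0 False by auto
        moreover have "0 < ?L x \<or> 0 < ?L y" using \<open>\<not> (x = P \<and> y = P)\<close> x y by auto
        ultimately have "0 < (1 - u) * ?L x + u * ?L y"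
          using Lx Ly by (smt (verit) mult_nonneg_nonneg mult_pos_pos)
        then show ?thesis using aff by simp
      qed
    qed
  qed
qed

lemma sep:
  fixes a b c :: real and P :: "real \<times> real"
  assumes "a * fst P + b * snd P + c = 0"
    and "\<forall>v\<in>S1. 0 < a * fst v + b * snd v + c \<or> v = P"
    and "\<forall>v\<in>S2. a * fst v + b * snd v + c < 0 \<or> v = P"
    and "P \<notin> {0<..} \<times> {0<..}"
  shows "convex hull S1 \<inter> convex hull S2 \<inter> ({0<..} \<times> {0<..}) = {}"
proof -
  have h1: "convex hull S1 \<subseteq> {z. 0 < a * fst z + b * snd z + c} \<union> {P}"
    by (rule hull_minimal) (use assms(2) conv_half[OF assms(1)] in auto)
  have "(-a) * fst P + (-b) * snd P + (-c) = 0" using assms(1) by simp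
  note c2 = conv_half[OF this]
  have h2: "convex hull S2 \<subseteq> {z. 0 < (-a) * fst z + (-b) * snd z + (-c)} \<union> {P}"
    by (rule hull_minimal) (use assms(3) c2 in auto)
  show ?thesis using h1 h2 assms(4) by fastforce
qed



lemma good_diff: "good f \<Longrightarrow> good g \<Longrightarrow> good (\<lambda>x. f x - g x)"
proof -
  assume "good f" "good g"
  then have "good (\<lambda>x. f x + (-1) * g x)" by (rule good_add[OF _ good_mult[OF good_const]])
  then show ?thesis by simp
qed

lemma SA_good:
  assumes "standing_assms u0 ub rho0 rhob"
  shows "good u0" "good ub" "good rho0" "good rhob"
    and "\<exists>B. \<forall>x\<ge>0. \<bar>u0 x\<bar> \<le> B" "\<exists>B. \<forall>x\<ge>0. \<bar>ub x\<bar> \<le> B"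
    and "\<And>x. 0 \<le> x \<Longrightarrow> 0 < ub x" "\<And>x. 0 \<le> x \<Longrightarrow> 0 < rho0 x" "\<And>x. 0 \<le> x \<Longrightarrow> 0 < rhob x"
proof -
  note A = assms[unfolded standing_assms_def set_borel_measurable_def]
  have mu0: "(\<lambda>x. indicator {0..} x *\<^sub>R u0 x) \<in> borel_measurable borel" using A by (rule conjunct1)
  have bu0: "bounded (u0 ` {0..})" using A[THEN conjunct2] by (rule conjunct1)
  have mub: "(\<lambda>x. indicator {0..} x *\<^sub>R ub x) \<in> borel_measurable borel" using A[THEN conjunct2, THEN conjunct2] by (rule conjunct1)
  have bub: "bounded (ub ` {0..})" using A[THEN conjunct2, THEN conjunct2, THEN conjunct2] by (rule conjunct1)
  have pub: "\<forall>\<eta>\<ge>0. ub \<eta> > 0" using A[THEN conjunct2, THEN conjunct2, THEN conjunct2, THEN conjunct2] by (rule conjunct1)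
  have mr0: "(\<lambda>x. indicator {0..} x *\<^sub>R rho0 x) \<in> borel_measurable borel"
    using A[THEN conjunct2, THEN conjunct2, THEN conjunct2, THEN conjunct2, THEN conjunct2] by (rule conjunct1)
  have pr0: "\<forall>\<eta>\<ge>0. rho0 \<eta> > 0"
    using A[THEN conjunct2, THEN conjunct2, THEN conjunct2, THEN conjunct2, THEN conjunct2, THEN conjunct2] by (rule conjunct1)
  have br0: "\<forall>c\<ge>0. bounded (rho0 ` {0..c})"
    using A[THEN conjunct2, THEN conjunct2, THEN conjunct2, THEN conjunct2, THEN conjunct2, THEN conjunct2, THEN conjunct2] by (rule conjunct1)
  have mrb: "(\<lambda>x. indicator {0..} x *\<^sub>R rhob x) \<in> borel_measurable borel"
    using A[THEN conjunct2, THEN conjunct2, THEN conjunct2, THEN conjunct2, THEN conjunct2, THEN conjunct2, THEN conjunct2, THEN conjunct2] by (rule conjunct1)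
  have prb: "\<forall>\<eta>\<ge>0. rhob \<eta> > 0"
    using A[THEN conjunct2, THEN conjunct2, THEN conjunct2, THEN conjunct2, THEN conjunct2, THEN conjunct2, THEN conjunct2, THEN conjunct2, THEN conjunct2] by (rule conjunct1)
  have brb: "\<forall>c\<ge>0. bounded (rhob ` {0..c})"
    using A[THEN conjunct2, THEN conjunct2, THEN conjunct2, THEN conjunct2, THEN conjunct2, THEN conjunct2, THEN conjunct2, THEN conjunct2, THEN conjunct2] by (rule conjunct2)
  show Bu: "\<exists>B. \<forall>x\<ge>0. \<bar>u0 x\<bar> \<le> B" using bu0 unfolding bounded_real by auto
  show Bb: "\<exists>B. \<forall>x\<ge>0. \<bar>ub x\<bar> \<le> B" using bub unfolding bounded_real by auto
  show "\<And>x. 0 \<le> x \<Longrightarrow> 0 < ub x" "\<And>x. 0 \<le> x \<Longrightarrow> 0 < rho0 x" "\<And>x. 0 \<le> x \<Longrightarrow> 0 < rhob x"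
    using pub pr0 prb by auto
  show "good u0" using mu0 Bu unfolding good_def by fastforce
  show "good ub" using mub Bb unfolding good_def by fastforce
  have "\<exists>B. \<forall>x\<in>{0..c}. \<bar>rho0 x\<bar> \<le> B" if "c \<ge> 0" for c using br0 that unfolding bounded_real by blast
  then show "good rho0" using mr0 unfolding good_def by simp
  have "\<exists>B. \<forall>x\<in>{0..c}. \<bar>rhob x\<bar> \<le> B" if "c \<ge> 0" for c using brb that unfolding bounded_real by blast
  then show "good rhob" using mrb unfolding good_def by simp
qed

lemma F_facts:
  assumes SA: "standing_assms u0 ub rho0 rhob" and t: "0 \<le> t"
  shows "Fargmin u0 rho0 x t \<noteq> {}" "\<exists>K. Fargmin u0 rho0 x t \<subseteq> {0..K}"
    "\<And>z. 0 \<le> z \<Longrightarrow> Fmin u0 rho0 x t \<le> Fyxt u0 rho0 z x t"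
proof -
  note G = SA_good[OF SA]
  obtain B where B: "\<forall>x\<ge>0. \<bar>u0 x\<bar> \<le> B" using G by blast
  let ?g = "\<lambda>\<eta>. (t * u0 \<eta> + \<eta> - x) * rho0 \<eta>"
  have gg: "good ?g" by (rule good_mult[OF good_diff[OF good_add[OF good_mult[OF good_const G(1)] good_id] good_const] G(3)])
  define K where "K = max 0 (x + t * B)"
  have K0: "0 \<le> K" by (simp add: K_def)
  let ?h = "\<lambda>y. Fyxt u0 rho0 y x t"
  have cont: "continuous_on {0..K} ?h"
    unfolding Fyxt_def using good_lipschitz[OF gg K0] .
  have grow: "?h K < ?h y" if "y > K" for y
  proof -
    have "?h y = ?h K + (LINT \<eta>:{K<..y}|lborel. ?g \<eta>)"
      unfolding Fyxt_def using good_split[OF gg K0 less_imp_le[OF that]] by simp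
    moreover have "0 < (LINT \<eta>:{K<..y}|lborel. ?g \<eta>)"
    proof (rule good_pos[OF gg K0 that])
      fix \<eta> assume e: "\<eta> \<in> {K<..y}"
      then have e0: "0 \<le> \<eta>" "\<eta> > x + t * B" using K_def by auto
      have "- B \<le> u0 \<eta>" using B e0 by (metis abs_le_iff minus_le_iff)
      then have "t * (- B) \<le> t * u0 \<eta>" using t by (rule mult_left_mono)
      then have "0 < t * u0 \<eta> + \<eta> - x" using e0 by simp
      then show "0 < ?g \<eta>" using G(8)[OF e0(1)] by simp
    qed
    ultimately show ?thesis by simp
  qed
  note P = argmin_props[OF cont K0 grow]
  show "Fargmin u0 rho0 x t \<noteq> {}" using P(1) unfolding Fargmin_def Fmin_def .
  show "\<exists>K. Fargmin u0 rho0 x t \<subseteq> {0..K}" using P(2) unfolding Fargmin_def Fmin_def by blast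
  show "\<And>z. 0 \<le> z \<Longrightarrow> Fmin u0 rho0 x t \<le> Fyxt u0 rho0 z x t" using P(3) unfolding Fmin_def .
qed



lemma G_facts:
  assumes SA: "standing_assms u0 ub rho0 rhob" and t: "0 < t" and x: "0 < x"
  shows "Gargmin ub rhob x t \<noteq> {}" "\<exists>K<t. Gargmin ub rhob x t \<subseteq> {0..K}"
    "\<And>z. 0 \<le> z \<Longrightarrow> Gmin ub rhob x t \<le> Gtxt ub rhob z x t"
proof -
  note G = SA_good[OF SA]
  obtain B where B: "\<forall>x\<ge>0. \<bar>ub x\<bar> \<le> B" using G by blast
  have B0: "0 \<le> B" using B by (metis abs_ge_zero order.refl order_trans)
  let ?g = "\<lambda>\<eta>. (x - ub \<eta> * (t - \<eta>)) * rhob \<eta> * ub \<eta>"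
  have gg: "good ?g" by (rule good_mult[OF good_mult[OF good_diff[OF good_const good_mult[OF G(2) good_diff[OF good_const good_id]]] G(4)] G(2)])
  define K where "K = max 0 (t - x / (B + 1))"
  have K0: "0 \<le> K" by (simp add: K_def)
  have Kt: "K < t" using t x B0 by (auto simp: K_def)
  let ?h = "\<lambda>y. Gtxt ub rhob y x t"
  have cont: "continuous_on {0..K} ?h"
    unfolding Gtxt_def using good_lipschitz[OF gg K0] .
  have grow: "?h K < ?h y" if "y > K" for y
  proof -
    have "?h y = ?h K + (LINT \<eta>:{K<..y}|lborel. ?g \<eta>)"
      unfolding Gtxt_def using good_split[OF gg K0 less_imp_le[OF that]] by simp
    moreover have "0 < (LINT \<eta>:{K<..y}|lborel. ?g \<eta>)"
    proof (rule good_pos[OF gg K0 that])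
      fix \<eta> assume e: "\<eta> \<in> {K<..y}"
      then have e0: "0 \<le> \<eta>" "\<eta> > t - x / (B + 1)" using K_def by auto
      have ubp: "0 < ub \<eta>" using G(7)[OF e0(1)] .
      have "ub \<eta> * (t - \<eta>) < x"
      proof (cases "t \<le> \<eta>")
        case True
        then have "ub \<eta> * (t - \<eta>) \<le> 0" using ubp by (simp add: mult_nonneg_nonpos)
        then show ?thesis using x by simp
      next
        case False
        have "ub \<eta> \<le> B" using B e0 by auto
        then have "ub \<eta> * (t - \<eta>) \<le> B * (t - \<eta>)" using False by (intro mult_right_mono) auto
        also have "\<dots> \<le> B * (x / (B + 1))" using e0 B0 by (intro mult_left_mono) auto
        also have "\<dots> < x" using B0 x by (simp add: field_simps)
        finally show ?thesis .
      qed
      then show "0 < ?g \<eta>" using G(9)[OF e0(1)] ubp by simp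
    qed
    ultimately show ?thesis by simp
  qed
  note P = argmin_props[OF cont K0 grow]
  show "Gargmin ub rhob x t \<noteq> {}" using P(1) unfolding Gargmin_def Gmin_def .
  show "\<exists>K<t. Gargmin ub rhob x t \<subseteq> {0..K}" using P(2) Kt unfolding Gargmin_def Gmin_def by blast
  show "\<And>z. 0 \<le> z \<Longrightarrow> Gmin ub rhob x t \<le> Gtxt ub rhob z x t" using P(3) unfolding Gmin_def .
qed

lemma F_lin:
  assumes SA: "standing_assms u0 ub rho0 rhob" and y: "0 \<le> y"
  shows "Fyxt u0 rho0 y x2 t = Fyxt u0 rho0 y x1 t - (x2 - x1) * (LINT \<eta>:{0..y}|lborel. rho0 \<eta>)"
proof -
  note G = SA_good[OF SA]
  let ?g = "\<lambda>\<eta>. (t * u0 \<eta> + \<eta> - x1) * rho0 \<eta>"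
  have gg: "good ?g" by (rule good_mult[OF good_diff[OF good_add[OF good_mult[OF good_const G(1)] good_id] good_const] G(3)])
  have i1: "set_integrable lborel {0..y} ?g" by (rule good_integrable[OF gg, of _ y]) auto
  have i2: "set_integrable lborel {0..y} (\<lambda>\<eta>. (x2 - x1) * rho0 \<eta>)"
    by (rule good_integrable[OF good_mult[OF good_const G(3)], of _ y]) auto
  have "Fyxt u0 rho0 y x2 t = (LINT \<eta>:{0..y}|lborel. ?g \<eta> - (x2 - x1) * rho0 \<eta>)"
    unfolding Fyxt_def by (rule arg_cong[where f="set_lebesgue_integral lborel {0..y}"]) (auto simp: algebra_simps)
  also have "\<dots> = Fyxt u0 rho0 y x1 t - (x2 - x1) * (LINT \<eta>:{0..y}|lborel. rho0 \<eta>)"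
    unfolding Fyxt_def using set_integral_diff(2)[OF i1 i2] by simp
  finally show ?thesis .
qed

lemma G_lin:
  assumes SA: "standing_assms u0 ub rho0 rhob" and y: "0 \<le> y"
  shows "Gtxt ub rhob y x2 t = Gtxt ub rhob y x1 t + (x2 - x1) * (LINT \<eta>:{0..y}|lborel. rhob \<eta> * ub \<eta>)"
proof -
  note G = SA_good[OF SA]
  let ?g = "\<lambda>\<eta>. (x1 - ub \<eta> * (t - \<eta>)) * rhob \<eta> * ub \<eta>"
  have gg: "good ?g" by (rule good_mult[OF good_mult[OF good_diff[OF good_const good_mult[OF G(2) good_diff[OF good_const good_id]]] G(4)] G(2)])
  have i1: "set_integrable lborel {0..y} ?g" by (rule good_integrable[OF gg, of _ y]) auto
  have i2: "set_integrable lborel {0..y} (\<lambda>\<eta>. (x2 - x1) * (rhob \<eta> * ub \<eta>))"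
    by (rule good_integrable[OF good_mult[OF good_const good_mult[OF G(4) G(2)]], of _ y]) auto
  have "Gtxt ub rhob y x2 t = (LINT \<eta>:{0..y}|lborel. ?g \<eta> + (x2 - x1) * (rhob \<eta> * ub \<eta>))"
    unfolding Gtxt_def by (rule arg_cong[where f="set_lebesgue_integral lborel {0..y}"]) (auto simp: algebra_simps)
  also have "\<dots> = Gtxt ub rhob y x1 t + (x2 - x1) * (LINT \<eta>:{0..y}|lborel. rhob \<eta> * ub \<eta>)"
    unfolding Gtxt_def using set_integral_add(2)[OF i1 i2] by simp
  finally show ?thesis .
qed

lemma int_mono:
  assumes "good g" "\<And>x. 0 \<le> x \<Longrightarrow> 0 < g x"
  shows "\<And>a b. 0 \<le> a \<Longrightarrow> a < b \<Longrightarrow> (LINT \<eta>:{0..a}|lborel. g \<eta>) < (LINT \<eta>:{0..b}|lborel. g \<eta>)"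
    and "\<And>a. 0 \<le> (LINT \<eta>:{0..a}|lborel. g \<eta>)"
    and "\<And>a. 0 < a \<Longrightarrow> 0 < (LINT \<eta>:{0..a}|lborel. g \<eta>)"
proof -
  show nn: "\<And>a. 0 \<le> (LINT \<eta>:{0..a}|lborel. g \<eta>)"
    by (rule set_int_nonneg) (use assms(2) in \<open>auto intro: less_imp_le\<close>)
  show mono: "\<And>a b. 0 \<le> a \<Longrightarrow> a < b \<Longrightarrow> (LINT \<eta>:{0..a}|lborel. g \<eta>) < (LINT \<eta>:{0..b}|lborel. g \<eta>)"
  proof -
    fix a b :: real assume ab: "0 \<le> a" "a < b"
    have "0 < (LINT \<eta>:{a<..b}|lborel. g \<eta>)"
      by (rule good_pos[OF assms(1) ab]) (use assms(2) ab in auto)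
    then show "(LINT \<eta>:{0..a}|lborel. g \<eta>) < (LINT \<eta>:{0..b}|lborel. g \<eta>)"
      using good_split[OF assms(1) ab(1) less_imp_le[OF ab(2)]] by simp
  qed
  show "\<And>a. 0 < a \<Longrightarrow> 0 < (LINT \<eta>:{0..a}|lborel. g \<eta>)"
    using mono[of 0] nn[of 0] by fastforce
qed



lemma geo11:
  fixes t x1 x2 yl1 yh1 yl2 yh2 :: real
  assumes "0 < t" "x1 < x2" "yl1 \<le> yh1" "yh1 \<le> yl2" "yl2 \<le> yh2"
  shows "convex hull {(x1, t), (yl1, 0), (yh1, 0)} \<inter> convex hull {(x2, t), (yl2, 0), (yh2, 0)}
          \<inter> ({0<..} \<times> {0<..}) = {}"
proof (rule sep[where a="-t" and b="(x1+x2)/2 - yh1" and c="t * yh1" and P="(yh1, 0)"])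
  have "0 < t * ((x1 + x2) / 2 - x1)" "t * ((x1 + x2) / 2 - x2) < 0" using assms by (simp_all add: mult_pos_neg)
  moreover have "yl1 < yh1 \<Longrightarrow> 0 < t * (yh1 - yl1)" "yh1 < yl2 \<Longrightarrow> t * (yh1 - yl2) < 0"
    "yh1 < yh2 \<Longrightarrow> t * (yh1 - yh2) < 0" using assms by (simp_all add: mult_pos_neg)
  ultimately show "\<forall>v\<in>{(x1, t), (yl1, 0), (yh1, 0)}. 0 < - t * fst v + ((x1 + x2) / 2 - yh1) * snd v + t * yh1 \<or> v = (yh1, 0)"
    "\<forall>v\<in>{(x2, t), (yl2, 0), (yh2, 0)}. - t * fst v + ((x1 + x2) / 2 - yh1) * snd v + t * yh1 < 0 \<or> v = (yh1, 0)"
    using assms by (auto simp: algebra_simps)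
qed auto

lemma geo2:
  fixes t x1 x2 q th :: real and S2 :: "(real \<times> real) set"
  assumes "0 < t" "0 < x1" "x1 < x2" "0 \<le> q" "q \<le> th" "q < t"
    and S2: "\<forall>v\<in>S2. v = (x2, t) \<or> (snd v = 0 \<and> 0 \<le> fst v) \<or> (fst v = 0 \<and> 0 \<le> snd v \<and> snd v \<le> q)"
  shows "convex hull {(x1, t), (0, q), (0, th)} \<inter> convex hull S2 \<inter> ({0<..} \<times> {0<..}) = {}"
proof (rule sep[where a="-(t - q)" and b="(x1+x2)/2" and c="- ((x1+x2)/2) * q" and P="(0, q)"])
  let ?m = "(x1+x2)/2"
  have m: "0 < ?m" using assms by simp
  have A1: "0 < (t - q) * (?m - x1)" using assms by simp
  have A2: "(t - q) * (?m - x2) < 0" using assms by (simp add: mult_pos_neg)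
  have th: "q < th \<Longrightarrow> 0 < ?m * (th - q)" using m by simp
  have e1: "- (t - q) * x1 + ?m * t + - ?m * q = (t - q) * (?m - x1)" by (simp add: field_simps)
  have e2: "- (t - q) * 0 + ?m * th + - ?m * q = ?m * (th - q)" by (simp add: field_simps)
  have v1: "0 < - (t - q) * x1 + ?m * t + - ?m * q" unfolding e1 by (rule A1)
  have v2: "0 < - (t - q) * 0 + ?m * th + - ?m * q \<or> th = q" unfolding e2 using th assms(5) by force
  show "\<forall>v\<in>{(x1, t), (0, q), (0, th)}. 0 < - (t - q) * fst v + ?m * snd v + - ?m * q \<or> v = (0, q)"
  proof
    fix v assume "v \<in> {(x1, t), (0, q), (0, th)}"
    then consider "v = (x1, t)" | "v = (0, q)" | "v = (0, th)" by blast
    then show "0 < - (t - q) * fst v + ?m * snd v + - ?m * q \<or> v = (0, q)"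
    proof cases
      case 1 then show ?thesis using v1 by simp
    next
      case 2 then show ?thesis by simp
    next
      case 3 then show ?thesis using v2 by auto
    qed
  qed
  show "\<forall>v\<in>S2. - (t - q) * fst v + ?m * snd v + - ?m * q < 0 \<or> v = (0, q)"
  proof
    fix v assume "v \<in> S2"
    then consider "v = (x2, t)" | "snd v = 0" "0 \<le> fst v" | "fst v = 0" "0 \<le> snd v" "snd v \<le> q"
      using S2 by blast
    then show "- (t - q) * fst v + ?m * snd v + - ?m * q < 0 \<or> v = (0, q)"
    proof cases
      case 1
      have e3: "- (t - q) * x2 + ?m * t + - ?m * q = (t - q) * (?m - x2)" by (simp add: field_simps)
      have "- (t - q) * x2 + ?m * t + - ?m * q < 0" unfolding e3 by (rule A2)
      then show ?thesis using 1 by simp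
    next
      case 2
      have n1: "0 \<le> (t - q) * fst v" using 2 assms by simp
      have n2: "0 \<le> ?m * q" using m assms by simp
      have val: "- (t - q) * fst v + ?m * snd v + - ?m * q = - ((t - q) * fst v) - ?m * q" using 2 by (simp add: algebra_simps)
      show ?thesis
      proof (cases "q = 0 \<and> fst v = 0")
        case True then show ?thesis using 2 by (cases v) auto
      next
        case False
        then have "0 < q \<or> 0 < fst v" using 2 assms by auto
        then have "0 < (t - q) * fst v + ?m * q"
        proof
          assume "0 < q" then have "0 < ?m * q" using m by simp
          then show ?thesis using n1 by linarith
        next
          assume "0 < fst v" then have "0 < (t - q) * fst v" using assms by simp
          then show ?thesis using n2 by linarith
        qed
        then show ?thesis unfolding val by linarith
      qed
    next
      case 3
      show ?thesis
      proof (cases "snd v = q")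
        case True then show ?thesis using 3 by (cases v) auto
      next
        case False then have "snd v < q" using 3 by simp
        then have "?m * snd v < ?m * q" using m by simp
        moreover have "- (t - q) * fst v + ?m * snd v + - ?m * q = ?m * snd v - ?m * q" using 3 by simp
        ultimately show ?thesis by linarith
      qed
    qed
  qed
qed auto

lemma geo31:
  fixes t x1 x2 yh1 th1 yl2 yh2 :: real
  assumes "0 < t" "0 < x1" "x1 < x2" "0 \<le> yh1" "0 \<le> th1" "th1 \<le> t" "yh1 \<le> yl2" "yl2 \<le> yh2"
  shows "convex hull {(x1, t), (yh1, 0), (0, th1), (0, 0)} \<inter> convex hull {(x2, t), (yl2, 0), (yh2, 0)}
          \<inter> ({0<..} \<times> {0<..}) = {}"
proof (rule sep[where a="-t" and b="(x1+x2)/2 - yh1" and c="t * yh1" and P="(yh1, 0)"])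
  let ?m = "(x1+x2)/2"
  have "0 < t * (?m - x1)" "t * (?m - x2) < 0" using assms by (simp_all add: mult_pos_neg)
  moreover have "yh1 < yl2 \<Longrightarrow> t * (yh1 - yl2) < 0"
    "yh1 < yh2 \<Longrightarrow> t * (yh1 - yh2) < 0" using assms by (simp_all add: mult_pos_neg)
  moreover have "0 < yh1 \<Longrightarrow> 0 < t * yh1" using assms by simp
  moreover have "0 < (?m - yh1) * th1 + t * yh1 \<or> (yh1 = 0 \<and> th1 = 0)"
  proof (cases "yh1 = 0")
    case True
    then show ?thesis using assms by (cases "th1 = 0") auto
  next
    case False
    then have yp: "0 < yh1" using assms by simp
    show ?thesis
    proof (cases "?m \<ge> yh1")
      case True
      then have "0 \<le> (?m - yh1) * th1" using assms by simp
      then show ?thesis using yp assms by (smt (verit) mult_pos_pos)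
    next
      case False
      then have "(?m - yh1) * t \<le> (?m - yh1) * th1" using assms by (intro mult_left_mono_neg) auto
      moreover have "0 < ?m * t" using assms by simp
      moreover have "(?m - yh1) * t + t * yh1 = ?m * t" by (simp add: field_simps)
      ultimately show ?thesis by linarith
    qed
  qed
  ultimately show "\<forall>v\<in>{(x1, t), (yh1, 0), (0, th1), (0, 0)}. 0 < - t * fst v + (?m - yh1) * snd v + t * yh1 \<or> v = (yh1, 0)"
    "\<forall>v\<in>{(x2, t), (yl2, 0), (yh2, 0)}. - t * fst v + (?m - yh1) * snd v + t * yh1 < 0 \<or> v = (yh1, 0)"
    using assms by (auto simp: algebra_simps)
qed auto

lemma geo33:
  fixes t x1 x2 th1 yh2 :: real
  assumes "0 < t" "0 < x1" "x1 < x2" "0 \<le> th1" "0 \<le> yh2"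
  shows "convex hull {(x1, t), (0, 0), (0, th1), (0, 0)} \<inter> convex hull {(x2, t), (yh2, 0), (0, 0), (0, 0)}
          \<inter> ({0<..} \<times> {0<..}) = {}"
proof (rule sep[where a="-t" and b="(x1+x2)/2" and c="0" and P="(0, 0)"])
  let ?m = "(x1+x2)/2"
  have "0 < t * (?m - x1)" "t * (?m - x2) < 0" using assms by (simp_all add: mult_pos_neg)
  moreover have "0 < th1 \<Longrightarrow> 0 < ?m * th1" "0 < yh2 \<Longrightarrow> 0 < t * yh2" using assms by simp_all
  ultimately show "\<forall>v\<in>{(x1, t), (0, 0), (0, th1), (0, 0)}. 0 < - t * fst v + ?m * snd v + 0 \<or> v = (0, 0)"
    "\<forall>v\<in>{(x2, t), (yh2, 0), (0, 0), (0, 0)}. - t * fst v + ?m * snd v + 0 < 0 \<or> v = (0, 0)"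
    using assms by (auto simp: algebra_simps)
qed auto



lemma tri_cases:
  assumes "0 < x"
  shows "char_triangle u0 ub rho0 rhob x t =
    (if Fmin u0 rho0 x t < Gmin ub rhob x t then convex hull {(x, t), (y_lo u0 rho0 x t, 0), (y_hi u0 rho0 x t, 0)}
     else if Fmin u0 rho0 x t > Gmin ub rhob x t then convex hull {(x, t), (0, tau_lo ub rhob x t), (0, tau_hi ub rhob x t)}
     else convex hull {(x, t), (y_hi u0 rho0 x t, 0), (0, tau_hi ub rhob x t), (0, 0)})"
  using assms unfolding char_triangle_def Let_def
  by (cases "Fmin u0 rho0 x t" "Gmin ub rhob x t" rule: linorder_cases) auto

lemma main_lt:
  assumes SA: "standing_assms u0 ub rho0 rhob" and t: "0 < t" and x1: "0 < x1" and lt: "x1 < x2"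
  shows "char_triangle u0 ub rho0 rhob x1 t \<inter> char_triangle u0 ub rho0 rhob x2 t \<inter> ({0<..} \<times> {0<..}) = {}"
proof -
  have x2: "0 < x2" using x1 lt by simp
  note G = SA_good[OF SA]
  define c where "c = x2 - x1"
  have c: "0 < c" using lt by (simp add: c_def)
  define Mf where "Mf = (\<lambda>y. LINT \<eta>:{0..y}|lborel. rho0 \<eta>)"
  define Nf where "Nf = (\<lambda>y. LINT \<eta>:{0..y}|lborel. rhob \<eta> * ub \<eta>)"
  note IM = int_mono[OF G(3) G(8)]
  have Mmono: "\<And>a b. 0 \<le> a \<Longrightarrow> a < b \<Longrightarrow> Mf a < Mf b" and M0: "\<And>a. 0 \<le> Mf a"
    and Mpos: "\<And>a. 0 < a \<Longrightarrow> 0 < Mf a"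
    using IM unfolding Mf_def by auto
  have rbp: "\<And>x. 0 \<le> x \<Longrightarrow> 0 < rhob x * ub x" using G(7,9) by simp
  note IN = int_mono[OF good_mult[OF G(4) G(2)] rbp]
  have Nmono: "\<And>a b. 0 \<le> a \<Longrightarrow> a < b \<Longrightarrow> Nf a < Nf b" and N0: "\<And>a. 0 \<le> Nf a"
    and Npos: "\<And>a. 0 < a \<Longrightarrow> 0 < Nf a"
    using IN unfolding Nf_def by auto
  define SF1 where "SF1 = Fargmin u0 rho0 x1 t"
  define SF2 where "SF2 = Fargmin u0 rho0 x2 t"
  define SG1 where "SG1 = Gargmin ub rhob x1 t"
  define SG2 where "SG2 = Gargmin ub rhob x2 t"
  define F1 where "F1 = Fmin u0 rho0 x1 t"
  define F2 where "F2 = Fmin u0 rho0 x2 t"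
  define G1 where "G1 = Gmin ub rhob x1 t"
  define G2 where "G2 = Gmin ub rhob x2 t"
  have t0: "0 \<le> t" using t by simp
  obtain KF1 where KF1: "SF1 \<subseteq> {0..KF1}" using F_facts(2)[OF SA t0] unfolding SF1_def by blast
  obtain KF2 where KF2: "SF2 \<subseteq> {0..KF2}" using F_facts(2)[OF SA t0] unfolding SF2_def by blast
  obtain KG1 where KG1: "KG1 < t" "SG1 \<subseteq> {0..KG1}" using G_facts(2)[OF SA t x1] unfolding SG1_def by blast
  obtain KG2 where KG2: "KG2 < t" "SG2 \<subseteq> {0..KG2}" using G_facts(2)[OF SA t x2] unfolding SG2_def by blast
  have ne: "SF1 \<noteq> {}" "SF2 \<noteq> {}" "SG1 \<noteq> {}" "SG2 \<noteq> {}"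
    using F_facts(1)[OF SA t0] G_facts(1)[OF SA t x1] G_facts(1)[OF SA t x2]
    unfolding SF1_def SF2_def SG1_def SG2_def by auto
  have memF1: "y \<in> SF1 \<longleftrightarrow> 0 \<le> y \<and> Fyxt u0 rho0 y x1 t = F1" for y
    unfolding SF1_def F1_def Fargmin_def by auto
  have memF2: "y \<in> SF2 \<longleftrightarrow> 0 \<le> y \<and> Fyxt u0 rho0 y x2 t = F2" for y
    unfolding SF2_def F2_def Fargmin_def by auto
  have memG1: "y \<in> SG1 \<longleftrightarrow> 0 \<le> y \<and> Gtxt ub rhob y x1 t = G1" for y
    unfolding SG1_def G1_def Gargmin_def by auto
  have memG2: "y \<in> SG2 \<longleftrightarrow> 0 \<le> y \<and> Gtxt ub rhob y x2 t = G2" for y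
    unfolding SG2_def G2_def Gargmin_def by auto
  have lbF1: "\<And>z. 0 \<le> z \<Longrightarrow> F1 \<le> Fyxt u0 rho0 z x1 t" using F_facts(3)[OF SA t0] unfolding F1_def .
  have lbF2: "\<And>z. 0 \<le> z \<Longrightarrow> F2 \<le> Fyxt u0 rho0 z x2 t" using F_facts(3)[OF SA t0] unfolding F2_def .
  have lbG1: "\<And>z. 0 \<le> z \<Longrightarrow> G1 \<le> Gtxt ub rhob z x1 t" using G_facts(3)[OF SA t x1] unfolding G1_def .
  have lbG2: "\<And>z. 0 \<le> z \<Longrightarrow> G2 \<le> Gtxt ub rhob z x2 t" using G_facts(3)[OF SA t x2] unfolding G2_def .
  have Flin: "\<And>y. 0 \<le> y \<Longrightarrow> Fyxt u0 rho0 y x2 t = Fyxt u0 rho0 y x1 t - c * Mf y"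
    using F_lin[OF SA] unfolding c_def Mf_def by blast
  have Glin: "Gtxt ub rhob y x1 t = Gtxt ub rhob y x2 t - c * Nf y" if "0 \<le> y" for y
  proof -
    have "Gtxt ub rhob y x2 t = Gtxt ub rhob y x1 t + (x2 - x1) * (LINT \<eta>:{0..y}|lborel. rhob \<eta> * ub \<eta>)"
      by (rule G_lin[OF SA that])
    then show ?thesis unfolding c_def Nf_def by linarith
  qed
  have ordF: "y1 \<le> y2" if "y1 \<in> SF1" "y2 \<in> SF2" for y1 y2
  proof (rule argmin_mono[where hA="\<lambda>y. Fyxt u0 rho0 y x1 t" and hB="\<lambda>y. Fyxt u0 rho0 y x2 t" and c=c and M=Mf])
    show "\<And>y. 0 \<le> y \<Longrightarrow> Fyxt u0 rho0 y x2 t = Fyxt u0 rho0 y x1 t - c * Mf y" by (rule Flin)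
  qed (use c Mmono that memF1 memF2 lbF1 lbF2 in auto)
  have ordG: "y2 \<le> y1" if "y1 \<in> SG1" "y2 \<in> SG2" for y1 y2
  proof (rule argmin_mono[where hA="\<lambda>y. Gtxt ub rhob y x2 t" and hB="\<lambda>y. Gtxt ub rhob y x1 t" and c=c and M=Nf])
    show "\<And>y. 0 \<le> y \<Longrightarrow> Gtxt ub rhob y x1 t = Gtxt ub rhob y x2 t - c * Nf y" by (rule Glin)
  qed (use c Nmono that memG1 memG2 lbG1 lbG2 in auto)
  have rel: "F2 - G2 \<le> F1 - G1 - c * (Mf y1 + Nf y2)" if "y1 \<in> SF1" "y2 \<in> SG2" for y1 y2
  proof -
    have "F2 \<le> F1 - c * Mf y1" using lbF2[of y1] Flin[of y1] that memF1 by auto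
    moreover have "G1 + c * Nf y2 \<le> G2" using lbG1[of y2] Glin[of y2] that memG2 by auto
    ultimately show ?thesis by (simp add: algebra_simps)
  qed
  obtain y1' where y1': "y1' \<in> SF1" using ne by blast
  obtain y2' where y2': "y2' \<in> SG2" using ne by blast
  have "0 \<le> c * (Mf y1' + Nf y2')" using c M0 N0 by simp
  then have rel0: "F2 - G2 \<le> F1 - G1" using rel[OF y1' y2'] by simp
  define yl1 where "yl1 = y_lo u0 rho0 x1 t"
  define yh1 where "yh1 = y_hi u0 rho0 x1 t"
  define yl2 where "yl2 = y_lo u0 rho0 x2 t"
  define yh2 where "yh2 = y_hi u0 rho0 x2 t"
  define tl1 where "tl1 = tau_lo ub rhob x1 t"
  define th1 where "th1 = tau_hi ub rhob x1 t"
  define tl2 where "tl2 = tau_lo ub rhob x2 t"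
  define th2 where "th2 = tau_hi ub rhob x2 t"
  note defs = yl1_def yh1_def yl2_def yh2_def tl1_def th1_def tl2_def th2_def y_lo_def y_hi_def tau_lo_def tau_hi_def
    SF1_def SF2_def SG1_def SG2_def
  have BF1: "0 \<le> yl1" "yl1 \<le> yh1" using set_bounds(1,2)[OF ne(1) KF1]
    unfolding yl1_def yh1_def y_lo_def y_hi_def SF1_def by auto
  have BF2: "0 \<le> yl2" "yl2 \<le> yh2" using set_bounds(1,2)[OF ne(2) KF2]
    unfolding yl2_def yh2_def y_lo_def y_hi_def SF2_def by auto
  have BG1: "0 \<le> tl1" "tl1 \<le> th1" "th1 \<le> KG1" using set_bounds(1,2,3)[OF ne(3) KG1(2)]
    unfolding tl1_def th1_def tau_lo_def tau_hi_def SG1_def by auto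
  have BG2: "0 \<le> tl2" "tl2 \<le> th2" "th2 \<le> KG2" using set_bounds(1,2,3)[OF ne(4) KG2(2)]
    unfolding tl2_def th2_def tau_lo_def tau_hi_def SG2_def by auto
  have yy: "yh1 \<le> yl2" unfolding yh1_def yl2_def y_lo_def y_hi_def
    using sup_le_inf[OF ne(1) ne(2) ordF] unfolding SF1_def SF2_def .
  have tt: "th2 \<le> tl1" unfolding th2_def tl1_def tau_lo_def tau_hi_def
    using sup_le_inf[OF ne(4) ne(3)] ordG unfolding SG1_def SG2_def by blast
  have T1: "char_triangle u0 ub rho0 rhob x1 t =
    (if F1 < G1 then convex hull {(x1, t), (yl1, 0), (yh1, 0)}
     else if F1 > G1 then convex hull {(x1, t), (0, tl1), (0, th1)}
     else convex hull {(x1, t), (yh1, 0), (0, th1), (0, 0)})"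
    using tri_cases[OF x1] unfolding F1_def G1_def yl1_def yh1_def tl1_def th1_def .
  have T2: "char_triangle u0 ub rho0 rhob x2 t =
    (if F2 < G2 then convex hull {(x2, t), (yl2, 0), (yh2, 0)}
     else if F2 > G2 then convex hull {(x2, t), (0, tl2), (0, th2)}
     else convex hull {(x2, t), (yh2, 0), (0, th2), (0, 0)})"
    using tri_cases[OF x2] unfolding F2_def G2_def yl2_def yh2_def tl2_def th2_def .
  show ?thesis
  proof (cases F1 G1 rule: linorder_cases)
    case less
    then have "F2 < G2" using rel0 by simp
    then show ?thesis unfolding T1 T2 using less geo11[OF t lt BF1(2) yy BF2(2)] by simp
  next
    case greater
    have q: "0 \<le> tl1" "tl1 \<le> th1" "tl1 < t" using BG1 KG1(1) by auto
    have S2a: "\<forall>v\<in>{(x2, t), (yl2, 0), (yh2, 0)}. v = (x2, t) \<or> (snd v = 0 \<and> 0 \<le> fst v) \<or> (fst v = 0 \<and> 0 \<le> snd v \<and> snd v \<le> tl1)"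
      using BF2 by auto
    have S2b: "\<forall>v\<in>{(x2, t), (0, tl2), (0, th2)}. v = (x2, t) \<or> (snd v = 0 \<and> 0 \<le> fst v) \<or> (fst v = 0 \<and> 0 \<le> snd v \<and> snd v \<le> tl1)"
      using BG2 tt by auto
    have S2c: "\<forall>v\<in>{(x2, t), (yh2, 0), (0, th2), (0, 0)}. v = (x2, t) \<or> (snd v = 0 \<and> 0 \<le> fst v) \<or> (fst v = 0 \<and> 0 \<le> snd v \<and> snd v \<le> tl1)"
      using BF2 BG2 tt by auto
    show ?thesis unfolding T1 T2 using greater geo2[OF t x1 lt q S2a] geo2[OF t x1 lt q S2b] geo2[OF t x1 lt q S2c]
      by auto
  next
    case equal
    show ?thesis
    proof (cases "F2 < G2")
      case True
      have "0 \<le> th1" "th1 \<le> t" using BG1 KG1(1) by auto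
      then show ?thesis unfolding T1 T2 using True equal geo31[OF t x1 lt BF1(1)[THEN order_trans, OF BF1(2)] _ _ yy BF2(2)]
        by auto
    next
      case False
      then have e2: "F2 = G2" using rel0 equal by simp
      have z: "y1 = 0 \<and> y2 = 0" if "y1 \<in> SF1" "y2 \<in> SG2" for y1 y2
      proof -
        have "c * (Mf y1 + Nf y2) \<le> 0" using rel[OF that] equal e2 by simp
        then have "Mf y1 + Nf y2 \<le> 0" using c by (simp add: mult_le_0_iff)
        then have "Mf y1 = 0" "Nf y2 = 0" using M0[of y1] N0[of y2] by auto
        moreover have "0 \<le> y1" "0 \<le> y2" using that memF1 memG2 by auto
        ultimately show ?thesis using Mpos[of y1] Npos[of y2] by force
      qed
      have yh1z: "yh1 = 0" unfolding yh1_def y_hi_def using sup_zero[OF ne(1)] z y2' unfolding SF1_def by blast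
      have th2z: "th2 = 0" unfolding th2_def tau_hi_def using sup_zero[OF ne(4)] z y1' unfolding SG2_def by blast
      have "0 \<le> th1" "0 \<le> yh2" using BG1 BF2 by auto
      then show ?thesis unfolding T1 T2 using equal e2 geo33[OF t x1 lt] yh1z th2z by auto
    qed
  qed
qed


theorem lemma2p9:
  fixes u0 ub rho0 rhob :: "real \<Rightarrow> real" and t x1 x2 :: real
  assumes "standing_assms u0 ub rho0 rhob"
    and "t > 0" and "x1 > 0" and "x2 > 0" and "x1 \<noteq> x2"
  shows "char_triangle u0 ub rho0 rhob x1 t \<inter> char_triangle u0 ub rho0 rhob x2 t
           \<inter> ({0<..} \<times> {0<..}) = {}"
proof (cases "x1 < x2")
  case True
  then show ?thesis using main_lt[OF assms(1,2,3) True] by blast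
next
  case False
  then have "x2 < x1" using assms(5) by simp
  then show ?thesis using main_lt[OF assms(1,2,4)] by blast
qed

end
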